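(* Let $\Gamma$ be a graph with discriminant $P$ and let $x,y$ be vertices of $\Gamma$. If perfect state transfer occurs from $d^*e_x$ to $d^*e_y$ at time $\tau$, then $2\lambda$ is an algebraic integer for every $\lambda\in\Theta_P(e_x)$.
   Context: All graphs are finite and simple. For $\Gamma$ with symmetric arc set $\mathcal{A}$ ($t((x,y))=y$, $(x,y)^{-1}=(y,x)$): boundary matrix $d_{x,a}=\frac{1}{\sqrt{\deg x}}\delta_{x,t(a)}$, shift matrix $R_{a,b}=\delta_{a,b^{-1}}$, $U=R(2d^*d-I_{\mathcal{A}})$, discriminant $P=dRd^*$. Perfect state transfer from $\Phi$ to a distinct state $\Psi$ at time $\tau\in\mathbb{Z}_{\ge1}$ means $U^\tau\Phi=\gamma\Psi$ for some $|\gamma|=1$. For the spectral decomposition $P=\sum_\lambda\lambda E_\lambda$ (orthogonal eigenprojections), $\Theta_P(e_x)=\{\lambda\mid E_\lambda e_x\ne0\}$. *)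

theory Defs
  imports Complex_Main "HOL-Computational_Algebra.Polynomial"
begin

definition simple_graph :: "'v set \<Rightarrow> ('v \<Rightarrow> 'v \<Rightarrow> bool) \<Rightarrow> bool" where
  "simple_graph V E \<longleftrightarrow> finite V \<and> (\<forall>x y. E x y \<longrightarrow> x \<in> V \<and> y \<in> V)
     \<and> (\<forall>x y. E x y \<longrightarrow> E y x) \<and> (\<forall>x. \<not> E x x)"

text \<open>Symmetric arc set; an arc a = (x,y) has terminus t(a) = snd a, inverse (y,x).\<close>
definition arcs :: "'v set \<Rightarrow> ('v \<Rightarrow> 'v \<Rightarrow> bool) \<Rightarrow> ('v \<times> 'v) set" where
  "arcs V E = {(x, y). x \<in> V \<and> y \<in> V \<and> E x y}"

definition deg :: "'v set \<Rightarrow> ('v \<Rightarrow> 'v \<Rightarrow> bool) \<Rightarrow> 'v \<Rightarrow> nat" where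
  "deg V E x = card {y \<in> V. E x y}"

definition bdry :: "'v set \<Rightarrow> ('v \<Rightarrow> 'v \<Rightarrow> bool) \<Rightarrow> 'v \<Rightarrow> 'v \<times> 'v \<Rightarrow> real" where
  "bdry V E x a = (if x = snd a then 1 / sqrt (real (deg V E x)) else 0)"

definition shift :: "'v \<times> 'v \<Rightarrow> 'v \<times> 'v \<Rightarrow> real" where
  "shift a b = (if a = prod.swap b then 1 else 0)"

text \<open>Time evolution matrix U = R (2 d^* d - I) (indexed by arcs).\<close>
definition Umat :: "'v set \<Rightarrow> ('v \<Rightarrow> 'v \<Rightarrow> bool) \<Rightarrow> 'v \<times> 'v \<Rightarrow> 'v \<times> 'v \<Rightarrow> real" where
  "Umat V E a b = (\<Sum>c\<in>arcs V E. shift a c *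
      (2 * (\<Sum>z\<in>V. bdry V E z c * bdry V E z b) - (if c = b then 1 else 0)))"

definition Uact :: "'v set \<Rightarrow> ('v \<Rightarrow> 'v \<Rightarrow> bool) \<Rightarrow> ('v \<times> 'v \<Rightarrow> complex) \<Rightarrow> ('v \<times> 'v \<Rightarrow> complex)" where
  "Uact V E f = (\<lambda>a. if a \<in> arcs V E then (\<Sum>b\<in>arcs V E. complex_of_real (Umat V E a b) * f b) else 0)"

definition evec :: "'v \<Rightarrow> 'v \<Rightarrow> real" where
  "evec x = (\<lambda>z. if z = x then 1 else 0)"

definition dstar_e :: "'v set \<Rightarrow> ('v \<Rightarrow> 'v \<Rightarrow> bool) \<Rightarrow> 'v \<Rightarrow> ('v \<times> 'v \<Rightarrow> complex)" where
  "dstar_e V E x = (\<lambda>a. if a \<in> arcs V E then complex_of_real (bdry V E x a) else 0)"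

definition pst :: "'v set \<Rightarrow> ('v \<Rightarrow> 'v \<Rightarrow> bool) \<Rightarrow> ('v \<times> 'v \<Rightarrow> complex) \<Rightarrow> ('v \<times> 'v \<Rightarrow> complex) \<Rightarrow> nat \<Rightarrow> bool" where
  "pst V E \<Phi> \<Psi> \<tau> \<longleftrightarrow> \<Phi> \<noteq> \<Psi> \<and> \<tau> \<ge> 1 \<and>
     (\<exists>\<gamma>. cmod \<gamma> = 1 \<and> (Uact V E ^^ \<tau>) \<Phi> = (\<lambda>a. \<gamma> * \<Psi> a))"

text \<open>Discriminant P = d R d^* (indexed by vertices) and its action on vectors over V.\<close>
definition discr :: "'v set \<Rightarrow> ('v \<Rightarrow> 'v \<Rightarrow> bool) \<Rightarrow> 'v \<Rightarrow> 'v \<Rightarrow> real" where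
  "discr V E x y = (\<Sum>a\<in>arcs V E. \<Sum>b\<in>arcs V E. bdry V E x a * shift a b * bdry V E y b)"

definition Pact :: "'v set \<Rightarrow> ('v \<Rightarrow> 'v \<Rightarrow> bool) \<Rightarrow> ('v \<Rightarrow> real) \<Rightarrow> ('v \<Rightarrow> real)" where
  "Pact V E f = (\<lambda>x. if x \<in> V then (\<Sum>y\<in>V. discr V E x y * f y) else 0)"

definition vinner :: "'v set \<Rightarrow> ('v \<Rightarrow> real) \<Rightarrow> ('v \<Rightarrow> real) \<Rightarrow> real" where
  "vinner V f g = (\<Sum>x\<in>V. f x * g x)"

text \<open>Eigenspace of P for lambda (trivial if lambda is not an eigenvalue).\<close>
definition eigsp :: "'v set \<Rightarrow> ('v \<Rightarrow> 'v \<Rightarrow> bool) \<Rightarrow> real \<Rightarrow> ('v \<Rightarrow> real) set" where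
  "eigsp V E \<mu> = {f. (\<forall>x. x \<notin> V \<longrightarrow> f x = 0) \<and> Pact V E f = (\<lambda>x. \<mu> * f x)}"

definition eigproj :: "'v set \<Rightarrow> ('v \<Rightarrow> 'v \<Rightarrow> bool) \<Rightarrow> real \<Rightarrow> ('v \<Rightarrow> real) \<Rightarrow> ('v \<Rightarrow> real)" where
  "eigproj V E \<mu> v = (THE w. w \<in> eigsp V E \<mu> \<and> (\<forall>u\<in>eigsp V E \<mu>. vinner V (\<lambda>z. v z - w z) u = 0))"

definition Theta :: "'v set \<Rightarrow> ('v \<Rightarrow> 'v \<Rightarrow> bool) \<Rightarrow> 'v \<Rightarrow> real set" where
  "Theta V E x = {\<mu>. eigproj V E \<mu> (evec x) \<noteq> (\<lambda>_. 0)}"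

end

theory Submission
  imports Defs
begin

lemma vinner_add_left: "vinner V (\<lambda>z. f z + g z) h = vinner V f h + vinner V g h"
  by (simp add: vinner_def sum.distrib algebra_simps)
lemma vinner_diff_left: "vinner V (\<lambda>z. f z - g z) h = vinner V f h - vinner V g h"
  by (simp add: vinner_def sum_subtractf algebra_simps)
lemma vinner_scale_left: "vinner V (\<lambda>z. c * f z) h = c * vinner V f h"
  by (simp add: vinner_def sum_distrib_left algebra_simps)
lemma vinner_add_right: "vinner V h (\<lambda>z. f z + g z) = vinner V h f + vinner V h g"
  by (simp add: vinner_def sum.distrib algebra_simps)
lemma vinner_diff_right: "vinner V h (\<lambda>z. f z - g z) = vinner V h f - vinner V h g"
  by (simp add: vinner_def sum_subtractf algebra_simps)
lemma vinner_scale_right: "vinner V h (\<lambda>z. c * f z) = c * vinner V h f"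
  by (simp add: vinner_def sum_distrib_left algebra_simps)
lemma vinner_sym: "vinner V f g = vinner V g f"
  by (simp add: vinner_def mult.commute)

lemma proj_exists:
  fixes V :: "'v set"
  assumes fin: "finite V"
  shows "finite X \<Longrightarrow> X \<subseteq> V \<Longrightarrow> (\<lambda>_. 0) \<in> S \<Longrightarrow> (\<forall>f\<in>S. \<forall>g\<in>S. (\<lambda>z. f z + g z) \<in> S)
    \<Longrightarrow> (\<forall>f\<in>S. \<forall>c. (\<lambda>z. c * f z) \<in> S) \<Longrightarrow> (\<forall>f\<in>S. \<forall>z. z \<notin> X \<longrightarrow> f z = 0)
    \<Longrightarrow> \<forall>v. \<exists>w\<in>S. \<forall>u\<in>S. vinner V (\<lambda>z. v z - w z) u = 0"
proof (induction X arbitrary: S rule: finite_induct)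
  case empty
  have Z: "\<forall>u\<in>S. u = (\<lambda>_. 0)"
  proof
    fix u assume u: "u \<in> S"
    have "\<forall>z. u z = 0" using empty u by blast
    then show "u = (\<lambda>_. 0)" by (simp add: fun_eq_iff)
  qed
  show ?case
    apply (intro allI bexI[of _ "\<lambda>_. 0"] ballI)
    subgoal for v u
    proof -
      assume u: "u \<in> S"
      have "u = (\<lambda>_. 0)" using Z u by blast
      then show ?thesis by (simp add: vinner_def)
    qed
    subgoal using empty by blast
    done
next
  case (insert x X)
  have scl: "\<And>f c. f \<in> S \<Longrightarrow> (\<lambda>z. c * f z) \<in> S" using insert.prems(4) by blast
  have addl: "\<And>f g. f \<in> S \<Longrightarrow> g \<in> S \<Longrightarrow> (\<lambda>z. f z + g z) \<in> S" using insert.prems(3) by blast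
  define S' where "S' = {f\<in>S. f x = 0}"
  have IH: "\<forall>v. \<exists>w\<in>S'. \<forall>u\<in>S'. vinner V (\<lambda>z. v z - w z) u = 0"
    apply (rule insert.IH)
    using insert.prems insert.hyps unfolding S'_def by auto
  show ?case
  proof (cases "\<forall>f\<in>S. f x = 0")
    case True
    then have "S' = S" unfolding S'_def by auto
    then show ?thesis using IH by simp
  next
    case False
    then obtain s where s: "s \<in> S" "s x \<noteq> 0" by auto
    define s0 where "s0 = (\<lambda>z. (1 / s x) * s z)"
    have s0S: "s0 \<in> S" unfolding s0_def by (rule scl[OF s(1)])
    have s0x: "s0 x = 1" using s unfolding s0_def by simp
    obtain p0 where p0: "p0 \<in> S'" "\<forall>u\<in>S'. vinner V (\<lambda>z. s0 z - p0 z) u = 0" using IH by blast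
    define s1 where "s1 = (\<lambda>z. s0 z - p0 z)"
    have s1S: "s1 \<in> S"
    proof -
      have "p0 \<in> S" using p0(1) unfolding S'_def by blast
      then have "(\<lambda>z. (-1) * p0 z) \<in> S" by (rule scl)
      then have "(\<lambda>z. s0 z + (-1) * p0 z) \<in> S" by (rule addl[OF s0S])
      then show ?thesis unfolding s1_def by simp
    qed
    have s1x: "s1 x = 1" using p0 s0x unfolding s1_def S'_def by simp
    have s1orth: "\<forall>u\<in>S'. vinner V s1 u = 0" using p0 unfolding s1_def by simp
    have xV: "x \<in> V" using insert.prems(1) by blast
    have s1pos: "vinner V s1 s1 > 0"
    proof -
      have "vinner V s1 s1 = (\<Sum>z\<in>V. s1 z * s1 z)" by (simp add: vinner_def)
      also have "\<dots> \<ge> s1 x * s1 x"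
        using member_le_sum[of x V "\<lambda>z. s1 z * s1 z"] xV fin by simp
      finally show ?thesis using s1x by simp
    qed
    show ?thesis
    proof
      fix v
      obtain p' where p': "p' \<in> S'" "\<forall>u\<in>S'. vinner V (\<lambda>z. v z - p' z) u = 0" using IH by blast
      define c where "c = vinner V v s1 / vinner V s1 s1"
      define w where "w = (\<lambda>z. p' z + c * s1 z)"
      have "p' \<in> S" using p'(1) unfolding S'_def by blast
      moreover have "(\<lambda>z. c * s1 z) \<in> S" by (rule scl[OF s1S])
      ultimately have wS: "w \<in> S" unfolding w_def by (rule addl)
      have ps1: "vinner V p' s1 = 0" using s1orth p' by (simp add: vinner_sym)
      have "\<forall>u\<in>S. vinner V (\<lambda>z. v z - w z) u = 0"
      proof
        fix u assume uS: "u \<in> S"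
        define u' where "u' = (\<lambda>z. u z - u x * s1 z)"
        have u'S: "u' \<in> S'"
        proof -
          have "(\<lambda>z. (- u x) * s1 z) \<in> S" by (rule scl[OF s1S])
          then have "(\<lambda>z. u z + (- u x) * s1 z) \<in> S" by (rule addl[OF uS])
          then show ?thesis unfolding u'_def S'_def using s1x by simp
        qed
        have ueq: "u = (\<lambda>z. u' z + u x * s1 z)" unfolding u'_def by simp
        have e1: "vinner V (\<lambda>z. v z - w z) u' = 0"
        proof -
          have "(\<lambda>z. v z - w z) = (\<lambda>z. (v z - p' z) - c * s1 z)" unfolding w_def by auto
          then show ?thesis using p'(2) u'S s1orth
            by (simp add: vinner_diff_left vinner_scale_left)
        qed
        have e2: "vinner V (\<lambda>z. v z - w z) s1 = 0"
        proof -
          have "(\<lambda>z. v z - w z) = (\<lambda>z. (v z - p' z) - c * s1 z)" unfolding w_def by auto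
          then have "vinner V (\<lambda>z. v z - w z) s1 = vinner V v s1 - vinner V p' s1 - c * vinner V s1 s1"
            by (simp add: vinner_diff_left vinner_scale_left)
          then show ?thesis using ps1 s1pos unfolding c_def by simp
        qed
        show "vinner V (\<lambda>z. v z - w z) u = 0"
          by (subst ueq) (simp add: vinner_add_right vinner_scale_right e1 e2)
      qed
      then show "\<exists>w\<in>S. \<forall>u\<in>S. vinner V (\<lambda>z. v z - w z) u = 0" using wS by blast
    qed
  qed
qed


locale sg =
  fixes V :: "'v set" and E :: "'v \<Rightarrow> 'v \<Rightarrow> bool"
  assumes sg: "simple_graph V E"
begin

abbreviation "A \<equiv> arcs V E"
abbreviation "dg v \<equiv> real (deg V E v)"
abbreviation "sq v \<equiv> sqrt (real (deg V E v))"

lemma finV: "finite V" using sg by (simp add: simple_graph_def)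
lemma Esym: "E u v \<Longrightarrow> E v u" using sg by (simp add: simple_graph_def)
lemma EV: "E u v \<Longrightarrow> u \<in> V \<and> v \<in> V" using sg by (simp add: simple_graph_def)

lemma A_iff: "a \<in> A \<longleftrightarrow> fst a \<in> V \<and> snd a \<in> V \<and> E (fst a) (snd a)"
  by (cases a) (simp add: arcs_def)
lemma A_sub: "A \<subseteq> V \<times> V" by (auto simp: arcs_def)
lemma finA: "finite A" using finite_subset[OF A_sub] finV by simp
lemma swap_A: "prod.swap a \<in> A \<longleftrightarrow> a \<in> A"
  using Esym by (cases a) (auto simp: arcs_def)

lemma deg_alt: "deg V E v = card {u\<in>V. E u v}"
  unfolding deg_def using Esym by (metis)

lemma deg_pos1: "E u v \<Longrightarrow> deg V E v > 0"
proof -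
  assume "E u v"
  then have "u \<in> {u\<in>V. E u v}" using EV by auto
  moreover have "finite {u\<in>V. E u v}" using finV by simp
  ultimately show ?thesis unfolding deg_alt by (metis card_gt_0_iff empty_iff)
qed
lemma deg_pos2: "E u v \<Longrightarrow> deg V E u > 0" using deg_pos1 Esym by blast

lemma deg0_noE: "deg V E v = 0 \<Longrightarrow> \<not> E u v" using deg_pos1 by fastforce

lemma sq_sq: "sq v * sq v = dg v" by simp

lemma sumA: "(\<Sum>a\<in>A. \<phi> a) = (\<Sum>u\<in>V. \<Sum>v\<in>V. if E u v then \<phi> (u, v) else 0)"
proof -
  have "(\<Sum>a\<in>A. \<phi> a) = (\<Sum>a\<in>V \<times> V. if a \<in> A then \<phi> a else 0)"
  proof -
    have "V \<times> V \<inter> A = A" using A_sub by blast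
    then show ?thesis using finV sum.inter_restrict[of "V \<times> V" \<phi> A] by simp
  qed
  also have "\<dots> = (\<Sum>u\<in>V. \<Sum>v\<in>V. if (u,v) \<in> A then \<phi> (u, v) else 0)"
    by (simp add: sum.cartesian_product)
  also have "\<dots> = (\<Sum>u\<in>V. \<Sum>v\<in>V. if E u v then \<phi> (u, v) else 0)"
    by (intro sum.cong refl) (simp add: arcs_def)
  finally show ?thesis .
qed

lemma sum_nbr1: "(\<Sum>u\<in>V. if E u v then c else 0) = of_nat (deg V E v) * c"
  using finV by (simp add: sum.inter_filter[symmetric] deg_alt)
lemma sum_nbr2: "(\<Sum>v\<in>V. if E u v then c else 0) = of_nat (deg V E u) * c"
  using finV by (simp add: sum.inter_filter[symmetric] deg_def)

end

context sg begin

definition ds :: "('v \<Rightarrow> real) \<Rightarrow> ('v \<times> 'v \<Rightarrow> complex)" where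
  "ds h = (\<lambda>a. if a \<in> A then complex_of_real (h (snd a) / sq (snd a)) else 0)"
definition rs :: "('v \<Rightarrow> real) \<Rightarrow> ('v \<times> 'v \<Rightarrow> complex)" where
  "rs h = (\<lambda>a. if a \<in> A then complex_of_real (h (fst a) / sq (fst a)) else 0)"
definition Uadj :: "('v \<times> 'v \<Rightarrow> complex) \<Rightarrow> ('v \<times> 'v \<Rightarrow> complex)" where
  "Uadj g = (\<lambda>b. if b \<in> A then (\<Sum>a\<in>A. complex_of_real (Umat V E a b) * g a) else 0)"
definition ainner :: "('v \<times> 'v \<Rightarrow> complex) \<Rightarrow> ('v \<times> 'v \<Rightarrow> complex) \<Rightarrow> complex" where
  "ainner f g = (\<Sum>a\<in>A. f a * cnj (g a))"

lemma shift_swap: "shift a c = (if c = prod.swap a then 1 else 0)"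
  unfolding shift_def by auto

lemma bdry_swap: "bdry V E z (prod.swap a) = (if z = fst a then 1 / sq z else 0)"
  unfolding bdry_def by (cases a) auto

lemma Umat_formula:
  assumes a: "a \<in> A"
  shows "Umat V E a b = 2 * (if snd b = fst a then 1 / dg (fst a) else 0) - (if b = prod.swap a then 1 else 0)"
proof -
  have sa: "prod.swap a \<in> A" using a swap_A by simp
  have faV: "fst a \<in> V" using a A_iff by simp
  have "Umat V E a b = (\<Sum>c\<in>A. if c = prod.swap a then
      (2 * (\<Sum>z\<in>V. bdry V E z c * bdry V E z b) - (if c = b then 1 else 0)) else 0)"
    unfolding Umat_def shift_swap by (intro sum.cong refl) auto
  also have "\<dots> = 2 * (\<Sum>z\<in>V. bdry V E z (prod.swap a) * bdry V E z b) - (if prod.swap a = b then 1 else 0)"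
    using sa finA by (simp add: sum.delta')
  also have "(\<Sum>z\<in>V. bdry V E z (prod.swap a) * bdry V E z b) = (\<Sum>z\<in>V. if z = fst a then 1 / sq z * bdry V E z b else 0)"
    by (intro sum.cong refl) (simp add: bdry_swap)
  also have "\<dots> = 1 / sq (fst a) * bdry V E (fst a) b"
    using faV finV by (simp add: sum.delta')
  also have "\<dots> = (if snd b = fst a then 1 / dg (fst a) else 0)"
    unfolding bdry_def by (auto simp: divide_simps)
  finally show ?thesis by auto
qed

lemma Uact_formula:
  assumes a: "a \<in> A"
  shows "Uact V E f a = complex_of_real (2 / dg (fst a)) * (\<Sum>u\<in>V. if E u (fst a) then f (u, fst a) else 0) - f (prod.swap a)"
proof -
  have sa: "prod.swap a \<in> A" using a swap_A by simp
  have faV: "fst a \<in> V" using a A_iff by simp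
  have "Uact V E f a = (\<Sum>b\<in>A. complex_of_real (2 / dg (fst a)) * (if snd b = fst a then f b else 0)
      - (if b = prod.swap a then f b else 0))"
    unfolding Uact_def if_P[OF a] by (intro sum.cong refl) (auto simp: Umat_formula[OF a] algebra_simps)
  also have "\<dots> = complex_of_real (2 / dg (fst a)) * (\<Sum>b\<in>A. if snd b = fst a then f b else 0) - f (prod.swap a)"
    using sa finA by (simp add: sum_subtractf sum_distrib_left sum.delta')
  also have "(\<Sum>b\<in>A. if snd b = fst a then f b else 0) = (\<Sum>u\<in>V. \<Sum>v\<in>V. if E u v then (if v = fst a then f (u, v) else 0) else 0)"
    by (subst sumA) (simp only: prod.sel)
  also have "\<dots> = (\<Sum>u\<in>V. if E u (fst a) then f (u, fst a) else 0)"
  proof (intro sum.cong refl)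
    fix u
    have "(\<Sum>v\<in>V. if E u v then (if v = fst a then f (u, v) else 0) else 0)
        = (\<Sum>v\<in>V. if v = fst a then (if E u v then f (u, v) else 0) else 0)"
      by (intro sum.cong refl) auto
    also have "\<dots> = (if E u (fst a) then f (u, fst a) else 0)"
      using faV finV by (simp add: sum.delta')
    finally show "(\<Sum>v\<in>V. if E u v then (if v = fst a then f (u, v) else 0) else 0)
        = (if E u (fst a) then f (u, fst a) else 0)" .
  qed
  finally show ?thesis .
qed

lemma Uadj_formula:
  assumes b: "b \<in> A"
  shows "Uadj g b = complex_of_real (2 / dg (snd b)) * (\<Sum>v\<in>V. if E (snd b) v then g (snd b, v) else 0) - g (prod.swap b)"
proof -
  have sb: "prod.swap b \<in> A" using b swap_A by simp
  have fbV: "snd b \<in> V" using b A_iff by simp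
  have "Uadj g b = (\<Sum>a\<in>A. complex_of_real (2 / dg (snd b)) * (if fst a = snd b then g a else 0)
      - (if a = prod.swap b then g a else 0))"
    unfolding Uadj_def if_P[OF b] by (intro sum.cong refl) (auto simp: Umat_formula algebra_simps)
  also have "\<dots> = complex_of_real (2 / dg (snd b)) * (\<Sum>a\<in>A. if fst a = snd b then g a else 0) - g (prod.swap b)"
    using sb finA by (simp add: sum_subtractf sum_distrib_left sum.delta')
  also have "(\<Sum>a\<in>A. if fst a = snd b then g a else 0) = (\<Sum>u\<in>V. \<Sum>v\<in>V. if E u v then (if u = snd b then g (u, v) else 0) else 0)"
    by (subst sumA) (simp only: prod.sel)
  also have "\<dots> = (\<Sum>v\<in>V. \<Sum>u\<in>V. if u = snd b then (if E u v then g (u, v) else 0) else 0)"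
    by (subst sum.swap) (intro sum.cong refl, auto)
  also have "\<dots> = (\<Sum>v\<in>V. if E (snd b) v then g (snd b, v) else 0)"
    using fbV finV by (simp add: sum.delta')
  finally show ?thesis .
qed

end

context sg begin

lemma ds_in: "a \<in> A \<Longrightarrow> ds h a = complex_of_real (h (snd a) / sq (snd a))"
  by (simp add: ds_def)
lemma rs_in: "a \<in> A \<Longrightarrow> rs h a = complex_of_real (h (fst a) / sq (fst a))"
  by (simp add: rs_def)
lemma rs_swap: "rs h a = ds h (prod.swap a)"
  using swap_A[of a] by (cases a) (auto simp: rs_def ds_def)
lemma ds_swap: "ds h a = rs h (prod.swap a)"
  by (simp add: rs_swap)

lemma dstar_ds: "dstar_e V E x = ds (evec x)"
  unfolding dstar_e_def ds_def bdry_def evec_def by (rule ext) auto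

lemma discr_formula:
  "discr V E v y = (if y \<in> V \<and> v \<in> V \<and> E y v then 1 / (sq v * sq y) else 0)"
proof -
  have "discr V E v y = (\<Sum>a\<in>A. bdry V E v a * bdry V E y (prod.swap a))"
    unfolding discr_def
  proof (intro sum.cong refl)
    fix a assume a: "a \<in> A"
    have "(\<Sum>b\<in>A. bdry V E v a * shift a b * bdry V E y b)
        = (\<Sum>b\<in>A. if b = prod.swap a then bdry V E v a * bdry V E y b else 0)"
      by (intro sum.cong refl) (auto simp: shift_swap)
    also have "\<dots> = bdry V E v a * bdry V E y (prod.swap a)"
      using a swap_A finA by (simp add: sum.delta')
    finally show "(\<Sum>b\<in>A. bdry V E v a * shift a b * bdry V E y b) = bdry V E v a * bdry V E y (prod.swap a)" .
  qed
  also have "\<dots> = (\<Sum>a\<in>A. if a = (y, v) then 1 / (sq v * sq y) else 0)"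
    by (intro sum.cong refl) (auto simp: bdry_def bdry_swap)
  also have "\<dots> = (if (y, v) \<in> A then 1 / (sq v * sq y) else 0)"
    using finA by (simp add: sum.delta')
  finally show ?thesis by (simp add: arcs_def)
qed

lemma Pact_formula:
  assumes "v \<in> V"
  shows "Pact V E h v = (\<Sum>u\<in>V. if E u v then h u / (sq v * sq u) else 0)"
  unfolding Pact_def using assms by (auto simp: discr_formula intro!: sum.cong)

lemma Pact_formula2:
  assumes "v \<in> V"
  shows "Pact V E h v = (\<Sum>u\<in>V. if E u v then h u / sq u else 0) / sq v"
  unfolding Pact_formula[OF assms] sum_divide_distrib
  by (intro sum.cong refl) auto

lemma Uact_ds: "Uact V E (ds h) = rs h"
proof
  fix a
  show "Uact V E (ds h) a = rs h a"
  proof (cases "a \<in> A")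
    case False then show ?thesis by (simp add: Uact_def rs_def)
  next
    case a: True
    have fV: "fst a \<in> V" and Ef: "E (fst a) (snd a)" using a A_iff by auto
    have dpos: "dg (fst a) > 0" using deg_pos2[OF Ef] by simp
    have "(\<Sum>u\<in>V. if E u (fst a) then ds h (u, fst a) else 0)
        = (\<Sum>u\<in>V. if E u (fst a) then complex_of_real (h (fst a) / sq (fst a)) else 0)"
      by (intro sum.cong refl) (auto simp: ds_def arcs_def dest: EV)
    also have "\<dots> = of_nat (deg V E (fst a)) * complex_of_real (h (fst a) / sq (fst a))"
      by (rule sum_nbr1)
    finally have s: "(\<Sum>u\<in>V. if E u (fst a) then ds h (u, fst a) else 0) = \<dots>" .
    have sw: "ds h (prod.swap a) = complex_of_real (h (fst a) / sq (fst a))"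
      using a swap_A by (simp add: ds_def)
    show ?thesis unfolding Uact_formula[OF a] s sw rs_in[OF a]
      using dpos by (simp add: field_simps)
  qed
qed

lemma Uact_rs: "Uact V E (rs h) = (\<lambda>e. 2 * rs (Pact V E h) e - ds h e)"
proof
  fix a
  show "Uact V E (rs h) a = 2 * rs (Pact V E h) a - ds h a"
  proof (cases "a \<in> A")
    case False then show ?thesis by (simp add: Uact_def rs_def ds_def)
  next
    case a: True
    have fV: "fst a \<in> V" and Ef: "E (fst a) (snd a)" using a A_iff by auto
    have dpos: "dg (fst a) > 0" using deg_pos2[OF Ef] by simp
    define S where "S = (\<Sum>u\<in>V. if E u (fst a) then h u / sq u else 0)"
    have "(\<Sum>u\<in>V. if E u (fst a) then rs h (u, fst a) else 0)
        = (\<Sum>u\<in>V. complex_of_real (if E u (fst a) then h u / sq u else 0))"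
      by (intro sum.cong refl) (auto simp: rs_def arcs_def dest: EV)
    also have "\<dots> = complex_of_real S" unfolding S_def by (simp only: of_real_sum)
    finally have s: "(\<Sum>u\<in>V. if E u (fst a) then rs h (u, fst a) else 0) = complex_of_real S" .
    have p: "Pact V E h (fst a) = S / sq (fst a)" unfolding S_def by (rule Pact_formula2[OF fV])
    have sw: "rs h (prod.swap a) = ds h a" by (simp add: rs_swap)
    have r: "2 / dg (fst a) * S = 2 * (S / sq (fst a) / sq (fst a))"
      using dpos by (simp add: field_simps)
    have "complex_of_real (2 / dg (fst a)) * complex_of_real S = 2 * complex_of_real (S / sq (fst a) / sq (fst a))"
      unfolding of_real_mult[symmetric] r by simp
    then show ?thesis unfolding Uact_formula[OF a] s sw rs_in[OF a] p by simp
  qed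
qed

lemma Uadj_rs: "Uadj (rs h) = ds h"
proof
  fix b
  show "Uadj (rs h) b = ds h b"
  proof (cases "b \<in> A")
    case False then show ?thesis by (simp add: Uadj_def ds_def)
  next
    case b: True
    have fV: "snd b \<in> V" and Ef: "E (fst b) (snd b)" using b A_iff by auto
    have dpos: "dg (snd b) > 0" using deg_pos1[OF Ef] by simp
    have "(\<Sum>v\<in>V. if E (snd b) v then rs h (snd b, v) else 0)
        = (\<Sum>v\<in>V. if E (snd b) v then complex_of_real (h (snd b) / sq (snd b)) else 0)"
      by (intro sum.cong refl) (auto simp: rs_def arcs_def dest: EV)
    also have "\<dots> = of_nat (deg V E (snd b)) * complex_of_real (h (snd b) / sq (snd b))"
      by (rule sum_nbr2)
    finally have s: "(\<Sum>v\<in>V. if E (snd b) v then rs h (snd b, v) else 0) = \<dots>" .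
    have sw: "rs h (prod.swap b) = complex_of_real (h (snd b) / sq (snd b))"
      using b swap_A by (simp add: rs_def)
    show ?thesis unfolding Uadj_formula[OF b] s sw ds_in[OF b]
      using dpos by (simp add: field_simps)
  qed
qed

lemma Uadj_ds: "Uadj (ds h) = (\<lambda>e. 2 * ds (Pact V E h) e - rs h e)"
proof
  fix b
  show "Uadj (ds h) b = 2 * ds (Pact V E h) b - rs h b"
  proof (cases "b \<in> A")
    case False then show ?thesis by (simp add: Uadj_def rs_def ds_def)
  next
    case b: True
    have fV: "snd b \<in> V" and Ef: "E (fst b) (snd b)" using b A_iff by auto
    have dpos: "dg (snd b) > 0" using deg_pos1[OF Ef] by simp
    define S where "S = (\<Sum>u\<in>V. if E u (snd b) then h u / sq u else 0)"
    have "(\<Sum>v\<in>V. if E (snd b) v then ds h (snd b, v) else 0)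
        = (\<Sum>u\<in>V. complex_of_real (if E u (snd b) then h u / sq u else 0))"
      by (intro sum.cong refl) (auto simp: ds_def arcs_def dest: EV Esym)
    also have "\<dots> = complex_of_real S" unfolding S_def by (simp only: of_real_sum)
    finally have s: "(\<Sum>v\<in>V. if E (snd b) v then ds h (snd b, v) else 0) = complex_of_real S" .
    have p: "Pact V E h (snd b) = S / sq (snd b)" unfolding S_def by (rule Pact_formula2[OF fV])
    have sw: "ds h (prod.swap b) = rs h b" by (simp add: ds_swap)
    have r: "2 / dg (snd b) * S = 2 * (S / sq (snd b) / sq (snd b))"
      using dpos by (simp add: field_simps)
    have "complex_of_real (2 / dg (snd b)) * complex_of_real S = 2 * complex_of_real (S / sq (snd b) / sq (snd b))"
      unfolding of_real_mult[symmetric] r by simp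
    then show ?thesis unfolding Uadj_formula[OF b] s sw ds_in[OF b] p
      by (rule arg_cong[where f = "\<lambda>t. t - rs h b"])
  qed
qed

end

context sg begin

lemma ainner_swap: "ainner f g = ainner (\<lambda>a. f (prod.swap a)) (\<lambda>a. g (prod.swap a))"
  unfolding ainner_def
  by (rule sum.reindex_bij_witness[where i = prod.swap and j = prod.swap]) (auto simp: swap_A)

lemma ainner_rsrs: "ainner (rs f) (rs g) = ainner (ds f) (ds g)"
  by (subst ainner_swap) (simp only: rs_swap[of f] rs_swap[of g] swap_swap)
lemma ainner_rsds: "ainner (rs f) (ds g) = ainner (ds f) (rs g)"
  by (subst ainner_swap) (simp only: rs_swap[of f] ds_swap[of g] swap_swap)

lemma ainner_dsds:
  assumes g0: "\<forall>v\<in>V. deg V E v = 0 \<longrightarrow> g v = 0"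
  shows "ainner (ds f) (ds g) = complex_of_real (vinner V f g)"
proof -
  have "ainner (ds f) (ds g) = (\<Sum>a\<in>A. complex_of_real (f (snd a) * g (snd a) / dg (snd a)))"
    unfolding ainner_def
  proof (intro sum.cong refl)
    fix a assume a: "a \<in> A"
    have "ds f a * cnj (ds g a) = complex_of_real (f (snd a) / sq (snd a) * (g (snd a) / sq (snd a)))"
      unfolding ds_in[OF a] complex_cnj_complex_of_real of_real_mult[symmetric] by (rule refl)
    also have "f (snd a) / sq (snd a) * (g (snd a) / sq (snd a)) = f (snd a) * g (snd a) / (sq (snd a) * sq (snd a))"
      by simp
    also have "sq (snd a) * sq (snd a) = dg (snd a)" by simp
    finally show "ds f a * cnj (ds g a) = complex_of_real (f (snd a) * g (snd a) / dg (snd a))" .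
  qed
  also have "\<dots> = complex_of_real (\<Sum>a\<in>A. f (snd a) * g (snd a) / dg (snd a))"
    by (simp only: of_real_sum)
  also have "(\<Sum>a\<in>A. f (snd a) * g (snd a) / dg (snd a))
      = (\<Sum>u\<in>V. \<Sum>v\<in>V. if E u v then f v * g v / dg v else 0)"
    by (subst sumA) (simp only: prod.sel)
  also have "\<dots> = (\<Sum>v\<in>V. \<Sum>u\<in>V. if E u v then f v * g v / dg v else 0)"
    by (rule sum.swap)
  also have "\<dots> = (\<Sum>v\<in>V. dg v * (f v * g v / dg v))"
    by (intro sum.cong refl) (rule sum_nbr1)
  also have "\<dots> = vinner V f g"
    unfolding vinner_def using g0 by (intro sum.cong refl) auto
  finally show ?thesis .
qed

lemma ainner_dsrs:
  "ainner (ds f) (rs g) = complex_of_real (vinner V f (Pact V E g))"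
proof -
  have "ainner (ds f) (rs g) = (\<Sum>a\<in>A. complex_of_real (f (snd a) * g (fst a) / (sq (snd a) * sq (fst a))))"
    unfolding ainner_def by (intro sum.cong refl) (simp add: ds_def rs_def)
  also have "\<dots> = complex_of_real (\<Sum>a\<in>A. f (snd a) * g (fst a) / (sq (snd a) * sq (fst a)))"
    by (simp only: of_real_sum)
  also have "(\<Sum>a\<in>A. f (snd a) * g (fst a) / (sq (snd a) * sq (fst a)))
      = (\<Sum>u\<in>V. \<Sum>v\<in>V. if E u v then f v * g u / (sq v * sq u) else 0)"
    by (subst sumA) (simp only: prod.sel)
  also have "\<dots> = (\<Sum>v\<in>V. \<Sum>u\<in>V. if E u v then f v * g u / (sq v * sq u) else 0)"
    by (rule sum.swap)
  also have "\<dots> = (\<Sum>v\<in>V. f v * Pact V E g v)"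
  proof (intro sum.cong refl)
    fix v assume v: "v \<in> V"
    show "(\<Sum>u\<in>V. if E u v then f v * g u / (sq v * sq u) else 0) = f v * Pact V E g v"
      unfolding Pact_formula[OF v] sum_distrib_left by (intro sum.cong refl) auto
  qed
  also have "\<dots> = vinner V f (Pact V E g)" by (simp add: vinner_def)
  finally show ?thesis .
qed

lemma Uact_lin: "Uact V E (\<lambda>e. c * f e + d * g e) = (\<lambda>e. c * Uact V E f e + d * Uact V E g e)"
  unfolding Uact_def by (rule ext) (simp add: sum.distrib sum_distrib_left algebra_simps)
lemma Uadj_lin: "Uadj (\<lambda>e. c * f e + d * g e) = (\<lambda>e. c * Uadj f e + d * Uadj g e)"
  unfolding Uadj_def by (rule ext) (simp add: sum.distrib sum_distrib_left algebra_simps)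

lemma ainner_lin_left: "ainner (\<lambda>e. c * f e + d * g e) h = c * ainner f h + d * ainner g h"
  unfolding ainner_def by (simp add: sum.distrib sum_distrib_left algebra_simps)
lemma ainner_lin_right: "ainner h (\<lambda>e. c * f e + d * g e) = cnj c * ainner h f + cnj d * ainner h g"
  unfolding ainner_def by (simp add: sum.distrib sum_distrib_left algebra_simps)

lemma ainner_adj: "ainner (Uact V E f) g = ainner f (Uadj g)"
proof -
  have "ainner (Uact V E f) g = (\<Sum>a\<in>A. \<Sum>b\<in>A. complex_of_real (Umat V E a b) * f b * cnj (g a))"
    unfolding ainner_def Uact_def by (simp add: sum_distrib_right)
  also have "\<dots> = (\<Sum>b\<in>A. \<Sum>a\<in>A. complex_of_real (Umat V E a b) * f b * cnj (g a))"
    by (rule sum.swap)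
  also have "\<dots> = ainner f (Uadj g)"
    unfolding ainner_def Uadj_def by (simp add: sum_distrib_left mult_ac)
  finally show ?thesis .
qed

lemma ainner_adj_pow: "ainner ((Uact V E ^^ k) f) g = ainner f ((Uadj ^^ k) g)"
proof (induction k arbitrary: g)
  case 0 then show ?case by simp
next
  case (Suc k)
  have "ainner ((Uact V E ^^ Suc k) f) g = ainner ((Uact V E ^^ k) f) (Uadj g)"
    by (simp add: ainner_adj)
  also have "\<dots> = ainner f ((Uadj ^^ k) (Uadj g))" by (rule Suc.IH)
  also have "\<dots> = ainner f ((Uadj ^^ Suc k) g)" by (simp add: funpow_swap1)
  finally show ?case .
qed

lemma ds_scale: "ds (\<lambda>z. c * h z) = (\<lambda>e. complex_of_real c * ds h e)"
  unfolding ds_def by (rule ext) simp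
lemma rs_scale: "rs (\<lambda>z. c * h z) = (\<lambda>e. complex_of_real c * rs h e)"
  unfolding rs_def by (rule ext) simp

end

lemma funpow_lin:
  fixes T :: "('b \<Rightarrow> complex) \<Rightarrow> ('b \<Rightarrow> complex)"
  assumes lin: "\<And>c d f g. T (\<lambda>e. c * f e + d * g e) = (\<lambda>e. c * T f e + d * T g e)"
  shows "(T ^^ k) (\<lambda>e. (c::complex) * f e + d * g e) = (\<lambda>e. c * (T ^^ k) f e + d * (T ^^ k) g e)"
proof (induction k)
  case 0 show ?case by simp
next
  case (Suc k)
  have "(T ^^ Suc k) (\<lambda>e. c * f e + d * g e) = T ((T ^^ k) (\<lambda>e. c * f e + d * g e))" by simp
  also have "\<dots> = T (\<lambda>e. c * (T ^^ k) f e + d * (T ^^ k) g e)" by (simp only: Suc.IH)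
  also have "\<dots> = (\<lambda>e. c * T ((T ^^ k) f) e + d * T ((T ^^ k) g) e)" by (rule lin)
  finally show ?case by simp
qed

lemma span_pow:
  fixes T :: "('b \<Rightarrow> complex) \<Rightarrow> ('b \<Rightarrow> complex)"
  assumes lin: "\<And>c d f g. T (\<lambda>e. c * f e + d * g e) = (\<lambda>e. c * T f e + d * T g e)"
    and TF: "T F = (\<lambda>e. a1 * F e + b1 * G e)" and TG: "T G = (\<lambda>e. a2 * F e + b2 * G e)"
  shows "\<exists>p q. (T ^^ k) (\<lambda>e. c * F e + d * G e) = (\<lambda>e. p * F e + q * G e)"
proof (induction k arbitrary: c d)
  case 0 show ?case by (intro exI[of _ c] exI[of _ d]) simp
next
  case (Suc k)
  have "T (\<lambda>e. c * F e + d * G e) = (\<lambda>e. (c * a1 + d * a2) * F e + (c * b1 + d * b2) * G e)"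
    unfolding lin TF TG by (rule ext) (simp add: algebra_simps)
  moreover have "(T ^^ Suc k) (\<lambda>e. c * F e + d * G e) = (T ^^ k) (T (\<lambda>e. c * F e + d * G e))"
    by (simp only: funpow_Suc_right o_apply)
  ultimately have "(T ^^ Suc k) (\<lambda>e. c * F e + d * G e) = (T ^^ k) (\<lambda>e. (c * a1 + d * a2) * F e + (c * b1 + d * b2) * G e)"
    by simp
  then show ?case using Suc.IH[of "c * a1 + d * a2" "c * b1 + d * b2"] by metis
qed


fun Cp :: "nat \<Rightarrow> 'a::comm_ring_1 poly" where
  "Cp 0 = [:2:]" | "Cp (Suc 0) = [:0, 1:]" | "Cp (Suc (Suc k)) = pCons 0 (Cp (Suc k)) - Cp k"

lemma Cp_int: "coeff (Cp k :: 'a::comm_ring_1 poly) i \<in> \<int>"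
proof (induction k arbitrary: i rule: Cp.induct)
  case 1 then show ?case by (cases i) auto
next
  case 2 then show ?case by (cases i) (auto simp: coeff_pCons split: nat.splits)
next
  case (3 k)
  show ?case
  proof (cases i)
    case 0 then show ?thesis using "3.IH"(2)[of 0] by (simp add: coeff_diff)
  next
    case (Suc j) then show ?thesis using "3.IH"(1)[of j] "3.IH"(2)[of i] by (simp add: coeff_diff)
  qed
qed

lemma Cp_deg: "degree (Cp k :: real poly) \<le> k \<and> (k \<ge> 1 \<longrightarrow> degree (Cp k :: real poly) = k \<and> coeff (Cp k :: real poly) k = 1)"
proof (induction k rule: Cp.induct)
  case 1 then show ?case by simp
next
  case 2 then show ?case by simp
next
  case (3 k)
  let ?p = "pCons 0 (Cp (Suc k)) :: real poly"
  let ?q = "Cp k :: real poly"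
  have d1: "degree (Cp (Suc k) :: real poly) = Suc k" and c1: "coeff (Cp (Suc k) :: real poly) (Suc k) = 1"
    using "3.IH"(1) by auto
  have nz: "(Cp (Suc k) :: real poly) \<noteq> 0" using c1 by auto
  have dp: "degree ?p = Suc (Suc k)" using d1 nz by simp
  have cp: "coeff ?p (Suc (Suc k)) = 1" using c1 by simp
  have dq: "degree ?q < Suc (Suc k)" using "3.IH"(2) by simp
  have "degree (?p - ?q) = Suc (Suc k)"
    using dp dq by (metis degree_add_eq_left degree_minus diff_conv_add_uminus)
  moreover have "coeff (?p - ?q) (Suc (Suc k)) = 1"
    using cp dq by (simp add: coeff_diff coeff_eq_0)
  ultimately show ?case by simp
qed

lemma Cp_eval:
  fixes z :: complex
  assumes z: "z \<noteq> 0"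
  shows "poly (Cp k) (z + inverse z) = z ^ k + inverse z ^ k"
proof (induction k rule: Cp.induct)
  case 1 then show ?case by simp
next
  case 2 then show ?case by simp
next
  case (3 k)
  define w where "w = inverse z"
  have zw: "z * w = 1" using z unfolding w_def by simp
  have "poly (Cp (Suc (Suc k))) (z + w) = (z + w) * (z ^ Suc k + w ^ Suc k) - (z ^ k + w ^ k)"
    using "3.IH" unfolding w_def by simp
  also have "(z + w) * (z ^ Suc k + w ^ Suc k) = z ^ Suc (Suc k) + w ^ Suc (Suc k) + (z * w) * (z ^ k + w ^ k)"
    by (simp add: algebra_simps)
  finally show ?case using zw unfolding w_def by simp
qed

lemma Cp_real: "poly (Cp k :: complex poly) (complex_of_real s) = complex_of_real (poly (Cp k) s)"
  by (induction k rule: Cp.induct) simp_all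

lemma alg_int_2mu:
  fixes \<mu> :: real and z :: complex and \<tau> :: nat
  assumes z: "z \<noteq> 0" and s: "complex_of_real (2 * \<mu>) = z + inverse z"
    and zt: "z ^ (2 * \<tau>) = 1" and t: "\<tau> \<ge> 1"
  shows "algebraic_int (2 * \<mu>)"
proof -
  have "inverse z ^ (2 * \<tau>) = 1" using zt by (simp add: power_inverse)
  then have "poly (Cp (2 * \<tau>)) (z + inverse z) = 2" using Cp_eval[OF z, of "2 * \<tau>"] zt by simp
  then have "complex_of_real (poly (Cp (2 * \<tau>)) (2 * \<mu>)) = 2" using s Cp_real by metis
  then have p2: "poly (Cp (2 * \<tau>)) (2 * \<mu>) = (2::real)"
    by (metis of_real_numeral of_real_eq_iff)
  have dg: "degree (Cp (2 * \<tau>) :: real poly) = 2 * \<tau>" and lc: "coeff (Cp (2 * \<tau>) :: real poly) (2 * \<tau>) = 1"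
    using Cp_deg[of "2 * \<tau>"] t by auto
  show ?thesis
    by (rule algebraic_int_root[of 2 "Cp (2 * \<tau>)"]) (use p2 dg lc t Cp_int in auto)
qed


lemma Pact_add: "Pact V E (\<lambda>z. f z + g z) = (\<lambda>z. Pact V E f z + Pact V E g z)"
  unfolding Pact_def by (rule ext) (simp add: sum.distrib algebra_simps)
lemma Pact_scale: "Pact V E (\<lambda>z. c * f z) = (\<lambda>z. c * Pact V E f z)"
  unfolding Pact_def by (rule ext) (simp add: sum_distrib_left algebra_simps)
lemma Pact_zero: "Pact V E (\<lambda>_. 0) = (\<lambda>_. 0)"
  unfolding Pact_def by (rule ext) simp

lemma eigsp_zero: "(\<lambda>_. 0) \<in> eigsp V E \<mu>"
  unfolding eigsp_def by (simp add: Pact_zero)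
lemma eigsp_add: "f \<in> eigsp V E \<mu> \<Longrightarrow> g \<in> eigsp V E \<mu> \<Longrightarrow> (\<lambda>z. f z + g z) \<in> eigsp V E \<mu>"
  unfolding eigsp_def by (auto simp: Pact_add algebra_simps)
lemma eigsp_scale: "f \<in> eigsp V E \<mu> \<Longrightarrow> (\<lambda>z. c * f z) \<in> eigsp V E \<mu>"
  unfolding eigsp_def by (auto simp: Pact_scale algebra_simps)

lemma eigproj_spec:
  assumes fin: "finite V"
  shows "eigproj V E \<mu> v \<in> eigsp V E \<mu> \<and>
    (\<forall>u\<in>eigsp V E \<mu>. vinner V (\<lambda>z. v z - eigproj V E \<mu> v z) u = 0)"
proof -
  let ?S = "eigsp V E \<mu>"
  have ex0: "\<forall>v. \<exists>w\<in>?S. \<forall>u\<in>?S. vinner V (\<lambda>z. v z - w z) u = 0"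
    apply (rule proj_exists[OF fin fin subset_refl])
       apply (rule eigsp_zero)
      apply (blast intro: eigsp_add)
     apply (blast intro: eigsp_scale)
    apply (simp add: eigsp_def)
    done
  then have ex: "\<exists>w\<in>?S. \<forall>u\<in>?S. vinner V (\<lambda>z. v z - w z) u = 0" by blast
  have uniq: "w1 = w2" if 1: "w1 \<in> ?S" "\<forall>u\<in>?S. vinner V (\<lambda>z. v z - w1 z) u = 0"
    and 2: "w2 \<in> ?S" "\<forall>u\<in>?S. vinner V (\<lambda>z. v z - w2 z) u = 0" for w1 w2
  proof -
    define d where "d = (\<lambda>z. w1 z + (-1) * w2 z)"
    have dS: "d \<in> ?S" unfolding d_def using 1 2 eigsp_add eigsp_scale by blast
    have "vinner V d d = vinner V (\<lambda>z. v z - w2 z) d - vinner V (\<lambda>z. v z - w1 z) d"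
      unfolding d_def vinner_def by (simp add: sum_subtractf[symmetric] algebra_simps)
    then have "vinner V d d = 0" using 1 2 dS by simp
    then have "\<forall>z\<in>V. d z * d z = 0"
      using fin unfolding vinner_def by (subst (asm) sum_nonneg_eq_0_iff) auto
    then have "\<forall>z\<in>V. w1 z = w2 z" unfolding d_def by auto
    moreover have "\<forall>z. z \<notin> V \<longrightarrow> w1 z = 0 \<and> w2 z = 0" using 1 2 by (auto simp: eigsp_def)
    ultimately show ?thesis by (metis ext)
  qed
  have "\<exists>!w. w \<in> ?S \<and> (\<forall>u\<in>?S. vinner V (\<lambda>z. v z - w z) u = 0)"
    using ex uniq by blast
  then show ?thesis unfolding eigproj_def by (rule theI')
qed


lemma vinner_evec: "x \<in> V \<Longrightarrow> finite V \<Longrightarrow> vinner V (evec x) g = g x"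
proof -
  assume x: "x \<in> V" and f: "finite V"
  have "vinner V (evec x) g = (\<Sum>z\<in>V. if z = x then g z else 0)"
    unfolding vinner_def evec_def by (intro sum.cong refl) auto
  also have "\<dots> = g x" using x f by (simp add: sum.delta')
  finally show ?thesis .
qed

context sg begin

lemma ainner_scale_left: "ainner (\<lambda>e. c * f e) h = c * ainner f h"
  unfolding ainner_def by (simp add: sum_distrib_left algebra_simps)
lemma Uact_scale: "Uact V E (\<lambda>e. c * f e) = (\<lambda>e. c * Uact V E f e)"
  unfolding Uact_def by (rule ext) (simp add: sum_distrib_left algebra_simps)

end

theorem lemma9p1:
  fixes V :: "'v set" and E :: "'v \<Rightarrow> 'v \<Rightarrow> bool" and x y :: 'v and \<tau> :: nat
  assumes "simple_graph V E" and "x \<in> V" and "y \<in> V"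
    and "pst V E (dstar_e V E x) (dstar_e V E y) \<tau>"
  shows "\<forall>\<mu>\<in>Theta V E x. algebraic_int (2 * \<mu>)"
proof
  fix \<mu> assume mu: "\<mu> \<in> Theta V E x"
  interpret sg V E by unfold_locales (rule assms(1))
  show "algebraic_int (2 * \<mu>)"
  proof (cases "\<mu> = 0 \<or> \<mu> = 1 \<or> \<mu> = -1")
    case True then show ?thesis by auto
  next
    case False
    then have m0: "\<mu> \<noteq> 0" and m1: "1 - \<mu> * \<mu> \<noteq> 0"
      by (auto simp: algebra_simps) (metis mult_minus_left mult_cancel_right1 square_eq_1_iff)
    define w where "w = eigproj V E \<mu> (evec x)"
    have wnz: "w \<noteq> (\<lambda>_. 0)" using mu unfolding Theta_def w_def by simp
    have wsp: "w \<in> eigsp V E \<mu>" and worth: "\<forall>u\<in>eigsp V E \<mu>. vinner V (\<lambda>z. evec x z - w z) u = 0"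
      using eigproj_spec[OF finV, of E \<mu> "evec x"] unfolding w_def by auto
    have Pw: "Pact V E w = (\<lambda>z. \<mu> * w z)" and w0: "\<forall>z. z \<notin> V \<longrightarrow> w z = 0"
      using wsp unfolding eigsp_def by auto
    define n where "n = vinner V w w"
    have "vinner V (\<lambda>z. evec x z - w z) w = 0" using worth wsp by blast
    then have wx: "w x = n" unfolding n_def vinner_diff_left vinner_evec[OF assms(2) finV] by simp
    have npos: "n > 0"
    proof -
      obtain z where z: "w z \<noteq> 0" using wnz by auto
      then have zV: "z \<in> V" using w0 by auto
      have "0 < (\<Sum>v\<in>V. w v * w v)"
        by (rule sum_pos2[OF finV zV]) (use z in \<open>auto simp: zero_less_mult_iff\<close>)
      then show ?thesis unfolding n_def vinner_def .
    qed
    have wiso: "\<forall>v\<in>V. deg V E v = 0 \<longrightarrow> w v = 0"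
    proof (intro ballI impI)
      fix v assume v: "v \<in> V" "deg V E v = 0"
      have "\<mu> * w v = Pact V E w v" using Pw by simp
      also have "\<dots> = 0" unfolding Pact_formula[OF v(1)] using deg0_noE[OF v(2)] by simp
      finally show "w v = 0" using m0 by simp
    qed
    define F where "F = ds w"
    define G where "G = rs w"
    define \<Phi> where "\<Phi> = ds (evec x)"
    define Y where "Y = ds (evec y)"
    define cm where "cm = complex_of_real \<mu>"
    define cn where "cn = complex_of_real n"
    have cn0: "cn \<noteq> 0" using npos unfolding cn_def by simp
    have vPw: "vinner V g (Pact V E w) = \<mu> * vinner V g w" for g
      unfolding Pw vinner_scale_right ..
    have iFF: "ainner F F = cn" unfolding F_def cn_def n_def by (rule ainner_dsds[OF wiso])
    have iPF: "ainner \<Phi> F = cn" unfolding \<Phi>_def F_def cn_def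
      by (simp add: ainner_dsds[OF wiso] vinner_evec[OF assms(2) finV] wx)
    have iFG: "ainner F G = cm * cn" unfolding F_def G_def cn_def cm_def n_def
      by (simp add: ainner_dsrs vPw)
    have iPG: "ainner \<Phi> G = cm * cn" unfolding \<Phi>_def G_def cn_def cm_def
      by (simp add: ainner_dsrs vPw vinner_evec[OF assms(2) finV] wx)
    have iGF: "ainner G F = cm * cn" unfolding G_def F_def using iFG unfolding F_def G_def
      by (simp add: ainner_rsds)
    have iGG: "ainner G G = cn" unfolding G_def using iFF unfolding F_def
      by (simp add: ainner_rsrs)
    have iYF: "ainner Y F = complex_of_real (vinner V (evec y) w)" unfolding Y_def F_def
      by (rule ainner_dsds[OF wiso])
    have iYG: "ainner Y G = cm * complex_of_real (vinner V (evec y) w)" unfolding Y_def G_def cm_def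
      by (simp add: ainner_dsrs vPw)
    have UF: "Uact V E F = (\<lambda>e. 0 * F e + 1 * G e)" unfolding F_def G_def Uact_ds by simp
    have UG: "Uact V E G = (\<lambda>e. (-1) * F e + (2 * cm) * G e)"
      unfolding G_def F_def Uact_rs Pw rs_scale cm_def by (rule ext) simp
    have AF: "Uadj F = (\<lambda>e. (2 * cm) * F e + (-1) * G e)"
      unfolding G_def F_def Uadj_ds Pw ds_scale cm_def by (rule ext) simp
    have AG: "Uadj G = (\<lambda>e. 1 * F e + 0 * G e)" unfolding F_def G_def Uadj_rs by simp
    note spanU = span_pow[of "Uact V E", OF Uact_lin UF UG]
    note spanA = span_pow[of Uadj, OF Uadj_lin AF AG]
    have key: "ainner ((Uact V E ^^ \<tau>) \<Phi>) (\<lambda>e. c * F e + d * G e)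
        = ainner ((Uact V E ^^ \<tau>) F) (\<lambda>e. c * F e + d * G e)" for c d
    proof -
      obtain p q where pq: "(Uadj ^^ \<tau>) (\<lambda>e. c * F e + d * G e) = (\<lambda>e. p * F e + q * G e)"
        using spanA by blast
      have "ainner ((Uact V E ^^ \<tau>) \<Phi>) (\<lambda>e. c * F e + d * G e) = ainner \<Phi> (\<lambda>e. p * F e + q * G e)"
        unfolding ainner_adj_pow pq ..
      also have "\<dots> = cnj p * cn + cnj q * (cm * cn)" unfolding ainner_lin_right iPF iPG ..
      also have "\<dots> = ainner F (\<lambda>e. p * F e + q * G e)" unfolding ainner_lin_right iFF iFG ..
      also have "\<dots> = ainner ((Uact V E ^^ \<tau>) F) (\<lambda>e. c * F e + d * G e)"
        unfolding ainner_adj_pow pq ..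
      finally show ?thesis .
    qed
    have keyF: "ainner ((Uact V E ^^ \<tau>) \<Phi>) F = ainner ((Uact V E ^^ \<tau>) F) F"
      using key[of 1 0] by simp
    have keyG: "ainner ((Uact V E ^^ \<tau>) \<Phi>) G = ainner ((Uact V E ^^ \<tau>) F) G"
      using key[of 0 1] by simp
    obtain \<gamma> where tau: "\<tau> \<ge> 1" and gam: "(Uact V E ^^ \<tau>) \<Phi> = (\<lambda>a. \<gamma> * Y a)"
      using assms(4) unfolding pst_def dstar_ds \<Phi>_def Y_def by blast
    obtain a b where ab: "(Uact V E ^^ \<tau>) F = (\<lambda>e. a * F e + b * G e)"
      using spanU[of \<tau> 1 0] by auto
    have "ainner ((Uact V E ^^ \<tau>) \<Phi>) G - cm * ainner ((Uact V E ^^ \<tau>) \<Phi>) F = 0"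
      unfolding gam ainner_scale_left iYF iYG by (simp add: algebra_simps)
    then have "ainner ((Uact V E ^^ \<tau>) F) G - cm * ainner ((Uact V E ^^ \<tau>) F) F = 0"
      using keyF keyG by simp
    then have "a * (cm * cn) + b * cn - cm * (a * cn + b * (cm * cn)) = 0"
      unfolding ab ainner_lin_left iFF iFG iGF iGG .
    then have "b * cn * (1 - cm * cm) = 0" by (simp add: algebra_simps)
    moreover have "1 - cm * cm \<noteq> 0" using m1 unfolding cm_def
      by (metis of_real_1 of_real_diff of_real_eq_0_iff of_real_mult)
    ultimately have b0: "b = 0" using cn0 by simp
    have UtF: "(Uact V E ^^ \<tau>) F = (\<lambda>e. a * F e)" using ab b0 by simp
    have UtG: "(Uact V E ^^ \<tau>) G = (\<lambda>e. a * G e)"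
    proof -
      have "(Uact V E ^^ \<tau>) G = (Uact V E ^^ \<tau>) (Uact V E F)" using UF by simp
      also have "\<dots> = Uact V E ((Uact V E ^^ \<tau>) F)" by (simp only: funpow_swap1)
      also have "\<dots> = (\<lambda>e. a * G e)" unfolding UtF Uact_scale using UF by simp
      finally show ?thesis .
    qed
    have root: "c ^ \<tau> = a" if c0: "c \<noteq> 0" and cr: "c * c - 2 * cm * c + 1 = 0" for c
    proof -
      define v where "v = (\<lambda>e. (- inverse c) * F e + 1 * G e)"
      have c2: "2 * cm - inverse c = c"
      proof -
        have "c * (2 * cm - inverse c) = c * c" using cr c0 by (simp add: algebra_simps)
        then show ?thesis using c0 by simp
      qed
      have Uv: "Uact V E v = (\<lambda>e. c * v e)"
        unfolding v_def Uact_lin UF UG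
      proof (rule ext)
        fix e
        have "- inverse c * (0 * F e + 1 * G e) + 1 * (- 1 * F e + 2 * cm * G e)
            = (2 * cm - inverse c) * G e - F e" by (simp add: algebra_simps)
        also have "\<dots> = c * G e - F e" using c2 by simp
        also have "\<dots> = c * (- inverse c * F e + 1 * G e)" using c0 by (simp add: algebra_simps)
        finally show "- inverse c * (0 * F e + 1 * G e) + 1 * (- 1 * F e + 2 * cm * G e)
            = c * (- inverse c * F e + 1 * G e)" .
      qed
      have Ukv: "(Uact V E ^^ k) v = (\<lambda>e. c ^ k * v e)" for k
      proof (induction k)
        case 0 then show ?case by simp
      next
        case (Suc k)
        have "(Uact V E ^^ Suc k) v = Uact V E ((Uact V E ^^ k) v)" by simp
        also have "\<dots> = (\<lambda>e. c ^ Suc k * v e)" unfolding Suc.IH Uact_scale Uv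
          by (simp add: algebra_simps)
        finally show ?case .
      qed
      have Utv: "(Uact V E ^^ \<tau>) v = (\<lambda>e. a * v e)"
        unfolding v_def funpow_lin[OF Uact_lin] UtF UtG by (rule ext) (simp add: algebra_simps)
      have "ainner v G - cm * ainner v F = cn * (1 - cm * cm)"
        unfolding v_def ainner_lin_left iFF iFG iGF iGG using c0 by (simp add: algebra_simps)
      moreover have "cn * (1 - cm * cm) \<noteq> 0" using cn0 \<open>1 - cm * cm \<noteq> 0\<close> by simp
      ultimately have "v \<noteq> (\<lambda>_. 0)" by (auto simp: ainner_def)
      then have "\<exists>e. v e \<noteq> 0" by (metis ext)
      then obtain e where e: "v e \<noteq> 0" by blast
      have "c ^ \<tau> * v e = a * v e" using Ukv[of \<tau>] Utv by metis
      then show ?thesis using e by simp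
    qed
    define z where "z = cm + csqrt (cm * cm - 1)"
    have zr: "z * z - 2 * cm * z + 1 = 0"
    proof -
      have "csqrt (cm * cm - 1) * csqrt (cm * cm - 1) = cm * cm - 1"
        using power2_csqrt[of "cm * cm - 1"] by (simp add: power2_eq_square)
      then show ?thesis unfolding z_def by (simp add: algebra_simps)
    qed
    have z0: "z \<noteq> 0" using zr by auto
    have zir: "inverse z * inverse z - 2 * cm * inverse z + 1 = 0"
    proof -
      have "(inverse z * inverse z - 2 * cm * inverse z + 1) * (z * z) = z * z - 2 * cm * z + 1"
        using z0 by (simp add: algebra_simps)
      then show ?thesis using zr z0 by simp
    qed
    have za: "z ^ \<tau> = a" by (rule root[OF z0 zr])
    have zia: "inverse z ^ \<tau> = a" by (rule root) (use z0 zir in auto)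
    have "a * a = 1"
    proof -
      have "a * a = z ^ \<tau> * inverse z ^ \<tau>" using za zia by simp
      also have "\<dots> = (z * inverse z) ^ \<tau>" by (simp add: power_mult_distrib)
      also have "\<dots> = 1" using z0 by simp
      finally show ?thesis .
    qed
    then have z2t: "z ^ (2 * \<tau>) = 1" using za by (simp add: power_mult power2_eq_square mult.commute)
    have s: "complex_of_real (2 * \<mu>) = z + inverse z"
    proof -
      have "(z + inverse z) * z = z * z + 1" using z0 by (simp add: algebra_simps)
      also have "\<dots> = 2 * cm * z" using zr by (simp add: algebra_simps)
      finally have "(z + inverse z) * z = (2 * cm) * z" .
      then have "z + inverse z = 2 * cm" using z0 by simp
      then show ?thesis unfolding cm_def by simp
    qed
    show ?thesis by (rule alg_int_2mu[OF z0 s z2t tau])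
  qed
qed

end
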